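(* Fix a nonempty compact set $C_0\subset\mathbb{R}_+^{n-1}$. There exist $\epsilon>0$ and a probability measure $\nu$ on $\mathbb{R}_+^{n-1}$ such that for every $t>0$ there is $c(t)>0$ with $$\mathbb{P}^t(\mathbf{y},A)\ge\epsilon\,c(t)\,\nu(A)\quad\text{for all }\mathbf{y}\in C_0\text{ and all Borel }A\subseteq\mathbb{R}_+^{n-1}.$$ Moreover $\inf_{t\in[a,b]}c(t)>0$ for every $0<a\le b<\infty$.
   Context: Fix $n\ge 2$ and a probability law $\theta$ on $(0,\infty)$ with mean $1$. The $n$-particle Stochastic Follow-the-Leader system $\mathbf{X}=(X_1,\dots,X_n)$ on $\mathbb{R}$, $X_n<\dots<X_1$, evolves as a pure jump Markov process: the leader $X_1$ jumps forward at rate $1$ with i.i.d. jump sizes of law $\theta$; for $i\ge2$, $X_i$ jumps at rate $X_{i-1}-X_i$ to a uniform location in $(X_i,X_{i-1})$. The gap process $\mathbf{Y}$, $Y_i=X_i-X_{i+1}$, is Markov on $\mathbb{R}_+^{n-1}$; $\mathbb{P}^t(\mathbf{y},A)=\mathbb{P}_{\mathbf{y}}(\mathbf{Y}(t)\in A)$. *)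

theory Defs
  imports "HOL-Probability.Probability"
begin

text \<open>Gap vectors of the n-particle SFL system: m = n - 1 gaps, stored as
  extensional functions on indices 0..m-1 (index i is the gap Y_(i+1) = X_(i+1) - X_(i+2)).\<close>

definition gap_space :: "nat \<Rightarrow> (nat \<Rightarrow> real) measure" where
  "gap_space m = PiM {..<m} (\<lambda>_. borel)"

definition pos_orthant :: "nat \<Rightarrow> (nat \<Rightarrow> real) set" where
  "pos_orthant m = {y \<in> space (gap_space m). \<forall>i<m. 0 < y i}"

text \<open>Total jump rate from gap state y: leader rate 1 plus rate Y_i for particle i+1.\<close>
definition total_rate :: "nat \<Rightarrow> (nat \<Rightarrow> real) \<Rightarrow> real" where
  "total_rate m y = 1 + (\<Sum>i<m. y i)"

definition lead_jump :: "(nat \<Rightarrow> real) \<Rightarrow> real \<Rightarrow> (nat \<Rightarrow> real)" where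
  "lead_jump y J = y(0 := y 0 + J)"

text \<open>Particle behind gap i jumps to the uniform location X + u * Y_i (u in (0,1)).\<close>
definition fol_jump :: "nat \<Rightarrow> nat \<Rightarrow> real \<Rightarrow> (nat \<Rightarrow> real) \<Rightarrow> (nat \<Rightarrow> real)" where
  "fol_jump m i u y =
     (if Suc i < m then y(i := (1 - u) * y i, Suc i := y (Suc i) + u * y i)
      else y(i := (1 - u) * y i))"

text \<open>Rate operator (unnormalised jump kernel) applied to a nonnegative function f.\<close>
definition rate_op :: "real measure \<Rightarrow> nat \<Rightarrow> ((nat \<Rightarrow> real) \<Rightarrow> ennreal) \<Rightarrow> (nat \<Rightarrow> real) \<Rightarrow> ennreal" where
  "rate_op \<theta> m f y =
     (\<integral>\<^sup>+ J. f (lead_jump y J) \<partial>\<theta>) +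
     (\<Sum>i<m. ennreal (y i) * (\<integral>\<^sup>+ u. indicator {0<..<1} u * f (fol_jump m i u y) \<partial>lborel))"

text \<open>Probability of being in A at time t after exactly k jumps (pure jump construction).\<close>
fun sfl_pk :: "real measure \<Rightarrow> nat \<Rightarrow> nat \<Rightarrow> real \<Rightarrow> (nat \<Rightarrow> real) \<Rightarrow> (nat \<Rightarrow> real) set \<Rightarrow> ennreal" where
  "sfl_pk \<theta> m 0 t y A = ennreal (exp (- total_rate m y * t)) * indicator A y"
| "sfl_pk \<theta> m (Suc k) t y A =
     (\<integral>\<^sup>+ s. indicator {0..t} s * ennreal (exp (- total_rate m y * s))
               * rate_op \<theta> m (\<lambda>z. sfl_pk \<theta> m k (t - s) z A) y \<partial>lborel)"

definition sfl_kernel :: "real measure \<Rightarrow> nat \<Rightarrow> real \<Rightarrow> (nat \<Rightarrow> real) \<Rightarrow> (nat \<Rightarrow> real) set \<Rightarrow> ennreal" where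
  "sfl_kernel \<theta> n t y A = (\<Sum>k. sfl_pk \<theta> (n - 1) k t y A)"

end

theory Submission
  imports Defs
begin

lemma sum_upd_real:
  fixes f :: "nat \<Rightarrow> real"
  assumes "finite S" "a \<in> S"
  shows "sum (f(a:=b)) S = sum f S - f a + b"
proof -
  have "sum (f(a:=b)) S = (f(a:=b)) a + sum (f(a:=b)) (S - {a})"
    using assms by (simp add: sum.remove)
  also have "sum (f(a:=b)) (S - {a}) = sum f (S - {a})"
    by (rule sum.cong) auto
  also have "sum f (S - {a}) = sum f S - f a"
    using assms by (simp add: sum_diff1)
  finally show ?thesis by simp
qed

lemma fol_jump_sum:
  assumes "i < m"
  shows "(\<Sum>j<m. fol_jump m i u y j) = (\<Sum>j<m. y j) - (if Suc i < m then 0 else u * y i)"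
proof (cases "Suc i < m")
  case True
  have e: "fol_jump m i u y = (y(i := (1 - u) * y i))(Suc i := y (Suc i) + u * y i)"
    using True by (simp add: fol_jump_def)
  show ?thesis unfolding e
    using True assms by (simp only: sum_upd_real finite_lessThan lessThan_iff) (simp add: algebra_simps)
next
  case False
  have e: "fol_jump m i u y = y(i := (1 - u) * y i)"
    using False by (simp add: fol_jump_def)
  show ?thesis unfolding e
    using False assms by (simp only: sum_upd_real finite_lessThan lessThan_iff) (simp add: algebra_simps)
qed

definition mrg :: "nat \<Rightarrow> (nat \<Rightarrow> real) \<Rightarrow> (nat \<Rightarrow> real) \<Rightarrow> (nat \<Rightarrow> real)" where
  "mrg i y x = (\<lambda>j. if j < i then y j else x j)"

lemma mrg_meas:
  assumes "i \<le> m"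
  shows "(\<lambda>x. mrg i y x) \<in> measurable (PiM {i..<m} (\<lambda>_. borel)) (gap_space m)"
  unfolding gap_space_def mrg_def
proof (rule measurable_PiM_single')
  fix j assume "j \<in> {..<m}"
  then show "(\<lambda>x. if j < i then y j else x j) \<in> borel_measurable (PiM {i..<m} (\<lambda>_. borel))"
    by (cases "j < i") auto
next
  show "(\<lambda>x j. if j < i then y j else x j) \<in> space (PiM {i..<m} (\<lambda>_. borel)) \<rightarrow> (\<Pi>\<^sub>E j\<in>{..<m}. space borel)"
    using assms by (auto simp: space_PiM PiE_def extensional_def)
qed

lemma mrg_meas2:
  assumes "i < m"
  shows "(\<lambda>p. mrg (Suc i) (y(i := fst p)) (snd p)) \<in> measurable (borel \<Otimes>\<^sub>M PiM {Suc i..<m} (\<lambda>_. borel)) (gap_space m)"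
  unfolding gap_space_def mrg_def
proof (rule measurable_PiM_single')
  fix j assume "j \<in> {..<m}"
  then show "(\<lambda>p. if j < Suc i then (y(i := fst p)) j else snd p j) \<in> borel_measurable (borel \<Otimes>\<^sub>M PiM {Suc i..<m} (\<lambda>_. borel))"
    by (cases "j < i"; cases "j = i") auto
next
  show "(\<lambda>p j. if j < Suc i then (y(i := fst p)) j else snd p j) \<in> space (borel \<Otimes>\<^sub>M PiM {Suc i..<m} (\<lambda>_. borel)) \<rightarrow> (\<Pi>\<^sub>E j\<in>{..<m}. space borel)"
    using assms by (auto simp: space_PiM PiE_def extensional_def space_pair_measure)
qed

lemma time_hasint:
  fixes K t :: real
  assumes "0 \<le> t"
  shows "((\<lambda>s. K * (t - s) ^ k / fact k) has_integral (K * t ^ Suc k / fact (Suc k))) {0..t}"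
proof -
  let ?F = "\<lambda>s. - (K * (t - s) ^ Suc k / fact (Suc k))"
  have "((\<lambda>s. K * (t - s) ^ k / fact k) has_integral (?F t - ?F 0)) {0..t}"
  proof (rule fundamental_theorem_of_calculus[OF assms])
    fix x :: real assume "x \<in> {0..t}"
    have "(?F has_real_derivative (K * (t - x) ^ k / fact k)) (at x within {0..t})"
      by (rule derivative_eq_intros refl | simp)+
    then show "(?F has_vector_derivative (K * (t - x) ^ k / fact k)) (at x within {0..t})"
      by (simp add: has_real_derivative_iff_has_vector_derivative)
  qed
  then show ?thesis by simp
qed

lemma time_nnint:
  fixes R t \<delta> :: real
  assumes "0 \<le> t" "0 \<le> \<delta>"
  shows "(\<integral>\<^sup>+s. indicator {0..t} s * ennreal (exp (- R * s) * (exp (- R * (t - s)) * (\<delta> * (t - s)) ^ k / fact k) * \<delta>) \<partial>lborel)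
     = ennreal (exp (- R * t) * (\<delta> * t) ^ Suc k / fact (Suc k))"
proof -
  let ?K = "exp (- R * t) * \<delta> ^ Suc k"
  have e: "exp (- R * s) * (exp (- R * (t - s)) * (\<delta> * (t - s)) ^ k / fact k) * \<delta> = ?K * (t - s) ^ k / fact k" for s
  proof -
    have h: "exp (- R * s) * exp (- R * (t - s)) = exp (- R * t)"
      by (simp add: exp_add[symmetric] algebra_simps)
    have "exp (- R * s) * (exp (- R * (t - s)) * (\<delta> * (t - s)) ^ k / fact k) * \<delta>
       = (exp (- R * s) * exp (- R * (t - s))) * \<delta> ^ Suc k * (t - s) ^ k / fact k"
      by (simp add: power_mult_distrib mult_ac)
    also have "\<dots> = ?K * (t - s) ^ k / fact k" unfolding h by simp
    finally show ?thesis .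
  qed
  have I1: "(\<integral>\<^sup>+s. ennreal (?K * (t - s) ^ k / fact k) * indicator {0..t} s \<partial>lborel) = ennreal (?K * t ^ Suc k / fact (Suc k))"
    by (rule nn_integral_has_integral_lebesgue'[OF _ time_hasint[OF assms(1)]]) (auto simp: assms)
  have I2: "(\<integral>\<^sup>+s. indicator {0..t} s * ennreal (exp (- R * s) * (exp (- R * (t - s)) * (\<delta> * (t - s)) ^ k / fact k) * \<delta>) \<partial>lborel)
     = (\<integral>\<^sup>+s. ennreal (?K * (t - s) ^ k / fact k) * indicator {0..t} s \<partial>lborel)"
    by (rule nn_integral_cong) (simp only: e, rule mult.commute)
  have I3: "?K * t ^ Suc k / fact (Suc k) = exp (- R * t) * (\<delta> * t) ^ Suc k / fact (Suc k)"
    by (simp only: power_mult_distrib mult_ac)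
  show ?thesis by (simp only: I1 I2 I3)
qed

lemma space_gap: "space (gap_space m) = {y. \<forall>j. m \<le> j \<longrightarrow> y j = undefined}"
  by (auto simp: gap_space_def space_PiM PiE_def extensional_def)

lemma fol_inv:
  fixes \<delta> R :: real
  assumes "i < m" "0 < u" "u < 1" "y \<in> space (gap_space m)" "\<forall>j<m. 0 \<le> y j"
    "\<forall>j. i \<le> j \<and> j < m \<longrightarrow> \<delta> \<le> y j" "total_rate m y \<le> R"
  shows "fol_jump m i u y \<in> space (gap_space m)" "\<forall>j<m. 0 \<le> fol_jump m i u y j"
    "\<forall>j. Suc i \<le> j \<and> j < m \<longrightarrow> \<delta> \<le> fol_jump m i u y j" "total_rate m (fol_jump m i u y) \<le> R"
    "mrg (Suc i) (fol_jump m i u y) = mrg (Suc i) (y(i := (1-u)*y i))"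
proof -
  have yi: "0 \<le> y i" using assms by auto
  show "fol_jump m i u y \<in> space (gap_space m)"
    using assms(1,4) by (auto simp: space_gap fol_jump_def)
  show "\<forall>j<m. 0 \<le> fol_jump m i u y j"
    using assms yi by (auto simp: fol_jump_def)
  show "\<forall>j. Suc i \<le> j \<and> j < m \<longrightarrow> \<delta> \<le> fol_jump m i u y j"
  proof (intro allI impI)
    fix j assume j: "Suc i \<le> j \<and> j < m"
    have "\<delta> \<le> y j" using assms(6) j by auto
    moreover have "0 \<le> u * y i" using assms yi by simp
    ultimately show "\<delta> \<le> fol_jump m i u y j"
      using j by (auto simp: fol_jump_def)
  qed
  have "0 \<le> u * y i" using assms yi by simp
  then show "total_rate m (fol_jump m i u y) \<le> R"
    using assms(7) fol_jump_sum[OF assms(1), of u y] by (auto simp: total_rate_def)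
  show "mrg (Suc i) (fol_jump m i u y) = mrg (Suc i) (y(i := (1-u)*y i))"
    by (auto simp: mrg_def fol_jump_def fun_eq_iff)
qed

context
  fixes A :: "(nat \<Rightarrow> real) set" and m :: nat and \<delta> :: real and M :: "real measure"
  assumes A: "A \<in> sets (gap_space m)" and dpos: "0 < \<delta>"
    and Mdef: "M = uniform_measure lborel {0<..<\<delta>}"
begin

lemma M_sets: "sets M = sets borel" by (simp add: Mdef)

lemma M_prob: "prob_space M"
  unfolding Mdef by (rule prob_space_uniform_measure) (use dpos in auto)

lemma M_psf: "product_sigma_finite (\<lambda>_::nat. M)"
  using product_prob_spaceI[of "\<lambda>_::nat. M"] M_prob unfolding product_prob_space_def by blast

lemma PiM_sf: "sigma_finite_measure (PiM I (\<lambda>_::nat. M))"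
  by (rule prob_space_imp_sigma_finite, rule prob_space_PiM, rule M_prob)

lemma sets_PiM_M: "sets (PiM I (\<lambda>_::nat. M)) = sets (PiM I (\<lambda>_. borel))"
  by (rule sets_PiM_cong[OF refl M_sets])

definition GG :: "nat \<Rightarrow> (nat \<Rightarrow> real) \<Rightarrow> ennreal" where
  "GG i y = (\<integral>\<^sup>+x. indicator A (mrg i y x) \<partial>PiM {i..<m} (\<lambda>_. M))"

lemma GG_peel:
  assumes "i < m"
  shows "GG i y = (\<integral>\<^sup>+z. GG (Suc i) (y(i:=z)) \<partial>M)"
proof -
  have I: "{i..<m} = insert i {Suc i..<m}" using assms by auto
  have "(\<lambda>x. indicator A (mrg i y x) :: ennreal) \<in> borel_measurable (PiM {i..<m} (\<lambda>_. borel))"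
    using measurable_compose[OF mrg_meas[of i m y] borel_measurable_indicator[OF A]] assms by simp
  then have meas: "(\<lambda>x. indicator A (mrg i y x) :: ennreal) \<in> borel_measurable (PiM (insert i {Suc i..<m}) (\<lambda>_. M))"
    unfolding I[symmetric] using measurable_cong_sets[OF sets_PiM_M refl] by blast
  have "GG i y = (\<integral>\<^sup>+z. (\<integral>\<^sup>+x. indicator A (mrg i y (x(i:=z))) \<partial>PiM {Suc i..<m} (\<lambda>_. M)) \<partial>M)"
    unfolding GG_def I
    by (rule product_sigma_finite.product_nn_integral_insert_rev[OF M_psf _ _ meas]) auto
  also have "\<dots> = (\<integral>\<^sup>+z. GG (Suc i) (y(i:=z)) \<partial>M)"
  proof -
    have "mrg i y (x(i:=z)) = mrg (Suc i) (y(i:=z)) x" for x z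
      by (auto simp: mrg_def fun_eq_iff)
    then show ?thesis unfolding GG_def by simp
  qed
  finally show ?thesis .
qed

lemma H_meas:
  assumes "i < m"
  shows "(\<lambda>z. GG (Suc i) (y(i:=z))) \<in> borel_measurable borel"
  unfolding GG_def
proof (rule sigma_finite_measure.borel_measurable_nn_integral[OF PiM_sf])
  have "(\<lambda>p. indicator A (mrg (Suc i) (y(i := fst p)) (snd p)) :: ennreal) \<in> borel_measurable (borel \<Otimes>\<^sub>M PiM {Suc i..<m} (\<lambda>_. borel))"
    using measurable_compose[OF mrg_meas2[of i m y] borel_measurable_indicator[OF A]] assms by simp
  then have "(\<lambda>p. indicator A (mrg (Suc i) (y(i := fst p)) (snd p)) :: ennreal) \<in> borel_measurable (borel \<Otimes>\<^sub>M PiM {Suc i..<m} (\<lambda>_. M))"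
    using measurable_cong_sets[OF sets_pair_measure_cong[OF refl sets_PiM_M] refl] by blast
  then show "(\<lambda>(z, x). indicator A (mrg (Suc i) (y(i := z)) x) :: ennreal) \<in> borel_measurable (borel \<Otimes>\<^sub>M PiM {Suc i..<m} (\<lambda>_. M))"
    by (simp add: case_prod_beta')
qed

lemma ind_aff:
  fixes w x :: real assumes "0 < w"
  shows "indicator {0<..<w} ((1 - x) * w) = (indicator {0<..<1} x :: ennreal)"
proof -
  have "((1 - x) * w \<in> {0<..<w}) = (x \<in> {0<..<1})"
    using assms by (auto simp: algebra_simps zero_less_mult_iff mult_less_cancel_left1)
  then show ?thesis by (simp add: indicator_def)
qed

lemma subst_ineq:
  assumes "i < m" "\<delta> \<le> w"
  shows "ennreal \<delta> * GG i y \<le> ennreal w * (\<integral>\<^sup>+u. indicator {0<..<1} u * GG (Suc i) (y(i := (1-u)*w)) \<partial>lborel)"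
proof -
  let ?H = "\<lambda>z. GG (Suc i) (y(i:=z))"
  have Hm: "?H \<in> borel_measurable borel" by (rule H_meas[OF assms(1)])
  have wpos: "0 < w" using assms dpos by simp
  have "(\<integral>\<^sup>+z. indicator {0<..<w} z * ?H z \<partial>lborel) = ennreal \<bar>-w\<bar> * (\<integral>\<^sup>+u. indicator {0<..<w} (w + - w * u) * ?H (w + - w * u) \<partial>lborel)"
    by (rule nn_integral_real_affine) (use Hm wpos in auto)
  also have "\<dots> = ennreal w * (\<integral>\<^sup>+u. indicator {0<..<1} u * ?H ((1-u)*w) \<partial>lborel)"
  proof -
    have a: "w + - w * u = (1-u)*w" for u by (simp add: algebra_simps)
    show ?thesis using wpos by (simp only: a ind_aff[OF wpos] abs_minus_cancel abs_of_pos)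
  qed
  finally have e1: "(\<integral>\<^sup>+z. indicator {0<..<w} z * ?H z \<partial>lborel) = ennreal w * (\<integral>\<^sup>+u. indicator {0<..<1} u * ?H ((1-u)*w) \<partial>lborel)" .
  have e2: "(\<integral>\<^sup>+z. indicator {0<..<\<delta>} z * ?H z \<partial>lborel) \<le> (\<integral>\<^sup>+z. indicator {0<..<w} z * ?H z \<partial>lborel)"
    by (rule nn_integral_mono) (use assms in \<open>auto simp: indicator_def\<close>)
  have "GG i y = (\<integral>\<^sup>+z. ?H z \<partial>M)" by (rule GG_peel[OF assms(1)])
  also have "\<dots> = (\<integral>\<^sup>+z. ?H z * indicator {0<..<\<delta>} z \<partial>lborel) / emeasure lborel {0<..<\<delta>}"
    using nn_integral_uniform_measure[of ?H lborel "{0<..<\<delta>}"] Hm unfolding Mdef[symmetric] by simp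
  also have "\<dots> = (\<integral>\<^sup>+z. indicator {0<..<\<delta>} z * ?H z \<partial>lborel) / ennreal \<delta>"
    using dpos by (simp add: mult.commute)
  finally have "ennreal \<delta> * GG i y = (\<integral>\<^sup>+z. indicator {0<..<\<delta>} z * ?H z \<partial>lborel)"
    using dpos by (simp add: ennreal_times_divide mult.commute[of "ennreal \<delta>"] ennreal_mult_divide_eq)
  then show ?thesis using e1 e2 by simp
qed

lemma rate_op_ge:
  assumes "i < m"
  shows "ennreal (y i) * (\<integral>\<^sup>+u. indicator {0<..<1} u * f (fol_jump m i u y) \<partial>lborel) \<le> rate_op \<theta> m f y"
proof -
  have "ennreal (y i) * (\<integral>\<^sup>+u. indicator {0<..<1} u * f (fol_jump m i u y) \<partial>lborel)
     \<le> (\<Sum>i<m. ennreal (y i) * (\<integral>\<^sup>+ u. indicator {0<..<1} u * f (fol_jump m i u y) \<partial>lborel))"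
    by (rule member_le_sum) (use assms in auto)
  also have "\<dots> \<le> rate_op \<theta> m f y"
    unfolding rate_op_def by (rule add_increasing) auto
  finally show ?thesis .
qed

lemma core:
  fixes \<theta> :: "real measure" and R :: real
  shows "k \<le> m \<Longrightarrow> y \<in> space (gap_space m) \<Longrightarrow> (\<forall>j<m. 0 \<le> y j) \<Longrightarrow>
    (\<forall>j. m - k \<le> j \<and> j < m \<longrightarrow> \<delta> \<le> y j) \<Longrightarrow> total_rate m y \<le> R \<Longrightarrow> 0 \<le> t \<Longrightarrow>
    ennreal (exp (- R * t) * (\<delta> * t) ^ k / fact k) * GG (m - k) y \<le> sfl_pk \<theta> m k t y A"
proof (induction k arbitrary: y t)
  case 0
  have "mrg m y (\<lambda>_. undefined) = y" using 0 by (auto simp: mrg_def fun_eq_iff space_gap)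
  then have G: "GG (m - 0) y = indicator A y"
    unfolding GG_def by (simp add: PiM_empty nn_integral_count_space_finite)
  have "- R * t \<le> - total_rate m y * t" using 0 by (simp add: mult_right_mono)
  then have "ennreal (exp (- R * t)) \<le> ennreal (exp (- total_rate m y * t))"
    by (intro ennreal_leI) simp
  then show ?case unfolding G by (simp add: mult_right_mono)
next
  case (Suc k)
  define i where "i = m - Suc k"
  have i: "i < m" "Suc i = m - k" "m - Suc k = i" using Suc.prems(1) by (auto simp: i_def)
  have yi: "\<delta> \<le> y i" using Suc.prems(4) i by auto
  let ?H = "\<lambda>z. GG (Suc i) (y(i:=z))"
  let ?c = "\<lambda>t. exp (- R * t) * (\<delta> * t) ^ k / fact k"
  have Hm: "?H \<in> borel_measurable borel" by (rule H_meas[OF i(1)])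
  have Hm2: "(\<lambda>u. indicator {0<..<1} u * ?H ((1-u) * y i)) \<in> borel_measurable lborel"
  proof -
    have "(\<lambda>u. ?H ((1-u) * y i)) \<in> borel_measurable borel"
      by (rule measurable_compose[OF _ Hm]) simp
    then show ?thesis by simp
  qed
  have P: "ennreal (exp (- R * s) * ?c (t - s) * \<delta>) * GG i y
     \<le> ennreal (exp (- total_rate m y * s)) * rate_op \<theta> m (\<lambda>z. sfl_pk \<theta> m k (t - s) z A) y"
    if s: "s \<in> {0..t}" for s
  proof -
    have cnn: "0 \<le> ?c (t - s)" using s dpos by simp
    have U: "indicator {0<..<1} u * (ennreal (?c (t - s)) * ?H ((1-u) * y i))
       \<le> indicator {0<..<1} u * sfl_pk \<theta> m k (t - s) (fol_jump m i u y) A" for u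
    proof (cases "u \<in> {0<..<1}")
      case True
      then have u: "0 < u" "u < 1" by auto
      note fi = fol_inv[OF i(1) u Suc.prems(2,3) _ Suc.prems(5), of \<delta>]
      have hyp: "\<forall>j. i \<le> j \<and> j < m \<longrightarrow> \<delta> \<le> y j" using Suc.prems(4) i by auto
      have "ennreal (?c (t - s)) * GG (m - k) (fol_jump m i u y) \<le> sfl_pk \<theta> m k (t - s) (fol_jump m i u y) A"
        using Suc.IH[OF _ fi(1)[OF hyp] fi(2)[OF hyp] _ fi(4)[OF hyp]] Suc.prems(1) fi(3)[OF hyp] i s by auto
      moreover have "GG (m - k) (fol_jump m i u y) = ?H ((1-u) * y i)"
        unfolding i(2)[symmetric] GG_def fi(5)[OF hyp] ..
      ultimately show ?thesis by (simp add: mult_left_mono)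
    qed simp
    have "ennreal (?c (t - s)) * (ennreal \<delta> * GG i y)
       \<le> ennreal (?c (t - s)) * (ennreal (y i) * (\<integral>\<^sup>+u. indicator {0<..<1} u * ?H ((1-u) * y i) \<partial>lborel))"
      by (rule mult_left_mono[OF subst_ineq[OF i(1) yi]]) simp
    also have "\<dots> = ennreal (y i) * (\<integral>\<^sup>+u. indicator {0<..<1} u * (ennreal (?c (t - s)) * ?H ((1-u) * y i)) \<partial>lborel)"
    proof -
      have "(\<integral>\<^sup>+u. indicator {0<..<1} u * (ennreal (?c (t - s)) * ?H ((1-u) * y i)) \<partial>lborel)
         = (\<integral>\<^sup>+u. ennreal (?c (t - s)) * (indicator {0<..<1} u * ?H ((1-u) * y i)) \<partial>lborel)"
        by (simp only: mult_ac)
      also have "\<dots> = ennreal (?c (t - s)) * (\<integral>\<^sup>+u. indicator {0<..<1} u * ?H ((1-u) * y i) \<partial>lborel)"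
        by (rule nn_integral_cmult[OF Hm2])
      finally show ?thesis by (simp only: mult_ac)
    qed
    also have "\<dots> \<le> ennreal (y i) * (\<integral>\<^sup>+u. indicator {0<..<1} u * sfl_pk \<theta> m k (t - s) (fol_jump m i u y) A \<partial>lborel)"
      by (intro mult_left_mono nn_integral_mono U) simp
    also have "\<dots> \<le> rate_op \<theta> m (\<lambda>z. sfl_pk \<theta> m k (t - s) z A) y"
      by (rule rate_op_ge[OF i(1)])
    finally have R1: "ennreal (?c (t - s)) * (ennreal \<delta> * GG i y) \<le> rate_op \<theta> m (\<lambda>z. sfl_pk \<theta> m k (t - s) z A) y" .
    have "- R * s \<le> - total_rate m y * s" using Suc.prems(5) s by (simp add: mult_right_mono)
    then have E: "ennreal (exp (- R * s)) \<le> ennreal (exp (- total_rate m y * s))"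
      by (intro ennreal_leI) simp
    have "ennreal (exp (- R * s) * ?c (t - s) * \<delta>) * GG i y = ennreal (exp (- R * s)) * (ennreal (?c (t - s)) * (ennreal \<delta> * GG i y))"
    proof -
      have e1: "ennreal (exp (- R * s) * ?c (t - s) * \<delta>) = ennreal (exp (- R * s) * ?c (t - s)) * ennreal \<delta>"
        by (rule ennreal_mult'') (use dpos in auto)
      have e2: "ennreal (exp (- R * s) * ?c (t - s)) = ennreal (exp (- R * s)) * ennreal (?c (t - s))"
        by (rule ennreal_mult') simp
      show ?thesis unfolding e1 e2 by (simp only: mult_ac)
    qed
    also have "\<dots> \<le> ennreal (exp (- total_rate m y * s)) * rate_op \<theta> m (\<lambda>z. sfl_pk \<theta> m k (t - s) z A) y"
      by (rule mult_mono[OF E R1]) auto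
    finally show ?thesis .
  qed
  have "ennreal (exp (- R * t) * (\<delta> * t) ^ Suc k / fact (Suc k)) * GG i y
     = (\<integral>\<^sup>+s. indicator {0..t} s * ennreal (exp (- R * s) * ?c (t - s) * \<delta>) \<partial>lborel) * GG i y"
    using time_nnint[OF Suc.prems(6), of \<delta> R k] dpos by simp
  also have "\<dots> = (\<integral>\<^sup>+s. indicator {0..t} s * ennreal (exp (- R * s) * ?c (t - s) * \<delta>) * GG i y \<partial>lborel)"
    by (rule nn_integral_multc[symmetric]) measurable
  also have "\<dots> \<le> (\<integral>\<^sup>+s. indicator {0..t} s * ennreal (exp (- total_rate m y * s)) * rate_op \<theta> m (\<lambda>z. sfl_pk \<theta> m k (t - s) z A) y \<partial>lborel)"
  proof (rule nn_integral_mono)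
    fix s
    show "indicator {0..t} s * ennreal (exp (- R * s) * ?c (t - s) * \<delta>) * GG i y
       \<le> indicator {0..t} s * ennreal (exp (- total_rate m y * s)) * rate_op \<theta> m (\<lambda>z. sfl_pk \<theta> m k (t - s) z A) y"
      using P[of s] by (cases "s \<in> {0..t}") (auto simp: mult.assoc)
  qed
  also have "\<dots> = sfl_pk \<theta> m (Suc k) t y A" by simp
  finally show ?case unfolding i(3) .
qed

end


lemma finite_min_bound:
  fixes C :: "(nat \<Rightarrow> real) set"
  shows "(\<forall>j<m. \<exists>d>0. \<forall>y\<in>C. d \<le> y j) \<Longrightarrow> \<exists>d>0. \<forall>j<m. \<forall>y\<in>C. d \<le> y j"
proof (induction m)
  case 0
  then show ?case by (intro exI[of _ 1]) auto
next
  case (Suc m)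
  then obtain d1 where d1: "d1 > 0" "\<forall>j<m. \<forall>y\<in>C. d1 \<le> y j" by auto
  from Suc.prems obtain d2 where d2: "d2 > 0" "\<forall>y\<in>C. d2 \<le> y m" by auto
  show ?case
  proof (intro exI[of _ "min d1 d2"] conjI allI impI ballI)
    show "0 < min d1 d2" using d1 d2 by simp
    fix j y assume "j < Suc m" "y \<in> C"
    show "min d1 d2 \<le> y j"
    proof (cases "j < m")
      case True
      then have "d1 \<le> y j" using d1 \<open>y \<in> C\<close> by blast
      then show ?thesis by linarith
    next
      case False
      then have "j = m" using \<open>j < Suc m\<close> by simp
      then have "d2 \<le> y j" using d2 \<open>y \<in> C\<close> by blast
      then show ?thesis by linarith
    qed
  qed
qed

theorem lemma5p2:
  fixes \<theta> :: "real measure" and n :: nat and C0 :: "(nat \<Rightarrow> real) set"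
  assumes "2 \<le> n"
    and "prob_space \<theta>" and "sets \<theta> = sets borel" and "AE x in \<theta>. 0 < x"
    and "integrable \<theta> (\<lambda>x. x)" and "(\<integral>x. x \<partial>\<theta>) = 1"
    and "compact C0" and "C0 \<noteq> {}" and "C0 \<subseteq> pos_orthant (n - 1)"
  shows "\<exists>\<epsilon>>0. \<exists>(\<nu> :: (nat \<Rightarrow> real) measure) (c :: real \<Rightarrow> real).
           prob_space \<nu> \<and> sets \<nu> = sets (gap_space (n - 1)) \<and>
           emeasure \<nu> (pos_orthant (n - 1)) = 1 \<and>
           (\<forall>t>0. 0 < c t \<and>
              (\<forall>y\<in>C0. \<forall>A\<in>sets (gap_space (n - 1)). A \<subseteq> pos_orthant (n - 1) \<longrightarrow>
                  ennreal (\<epsilon> * c t) * emeasure \<nu> A \<le> sfl_kernel \<theta> n t y A)) \<and>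
           (\<forall>a b. 0 < a \<and> a \<le> b \<longrightarrow> 0 < (INF t\<in>{a..b}. c t))"
proof -
  define m where "m = n - 1"
  have C0: "compact C0" "C0 \<noteq> {}" "C0 \<subseteq> pos_orthant m" using assms m_def by auto
  have "\<forall>j<m. \<exists>d>0. \<forall>y\<in>C0. d \<le> y j"
  proof (intro allI impI)
    fix j assume j: "j < m"
    have "continuous_on C0 (\<lambda>y. y j)"
      by (rule continuous_on_subset[OF continuous_on_product_coordinates]) simp
    then obtain y0 where y0: "y0 \<in> C0" "\<forall>y\<in>C0. y0 j \<le> y j"
      using continuous_attains_inf[OF C0(1,2)] by blast
    have "0 < y0 j" using y0(1) C0(3) j by (auto simp: pos_orthant_def)
    then show "\<exists>d>0. \<forall>y\<in>C0. d \<le> y j" using y0 by blast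
  qed
  then obtain \<delta> where dpos: "0 < \<delta>" and dle: "\<forall>j<m. \<forall>y\<in>C0. \<delta> \<le> y j"
    using finite_min_bound by blast
  have "continuous_on C0 (\<lambda>y. total_rate m y)"
    unfolding total_rate_def
    by (intro continuous_intros continuous_on_subset[OF continuous_on_product_coordinates]) simp
  then obtain y1 where y1: "y1 \<in> C0" "\<forall>y\<in>C0. total_rate m y \<le> total_rate m y1"
    using continuous_attains_sup[OF C0(1,2)] by blast
  define R where "R = max 0 (total_rate m y1)"
  have R0: "0 \<le> R" and Rb: "\<forall>y\<in>C0. total_rate m y \<le> R"
    using y1 by (auto simp: R_def intro: le_max_iff_disj[THEN iffD2])
  define M where "M = uniform_measure lborel {0<..<\<delta>}"
  define \<nu> where "\<nu> = PiM {..<m} (\<lambda>_. M)"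
  define c where "c = (\<lambda>t. exp (- R * t) * (\<delta> * t) ^ m / fact m)"
  have Mp: "prob_space M" unfolding M_def by (rule prob_space_uniform_measure) (use dpos in auto)
  have Ms: "sets M = sets borel" by (simp add: M_def)
  have nu_prob: "prob_space \<nu>" unfolding \<nu>_def by (rule prob_space_PiM[OF Mp])
  have nu_sets: "sets \<nu> = sets (gap_space m)"
    unfolding \<nu>_def gap_space_def by (rule sets_PiM_cong[OF refl Ms])
  have psf: "product_sigma_finite (\<lambda>_::nat. M)"
    using product_prob_spaceI[of "\<lambda>_::nat. M"] Mp unfolding product_prob_space_def by blast
  have pos_eq: "pos_orthant m = PiE {..<m} (\<lambda>_. {0<..})"
    by (auto simp: pos_orthant_def gap_space_def space_PiM PiE_def)
  have "emeasure M {0<..} = 1"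
  proof -
    have "{0<..<\<delta>} \<inter> {0<..} = {0<..<\<delta>::real}" by auto
    then show ?thesis
      using dpos unfolding M_def by (subst emeasure_uniform_measure) (auto simp: ennreal_divide_self)
  qed
  then have nu_pos: "emeasure \<nu> (pos_orthant m) = 1"
    unfolding \<nu>_def pos_eq
    by (subst product_sigma_finite.emeasure_PiM[OF psf]) (auto simp: Ms)
  have main: "ennreal (1 * c t) * emeasure \<nu> A \<le> sfl_kernel \<theta> n t y A"
    if t: "0 < t" and y: "y \<in> C0" and A: "A \<in> sets (gap_space m)" "A \<subseteq> pos_orthant m" for t y A
  proof -
    have yp: "y \<in> pos_orthant m" using y C0 by auto
    have "ennreal (exp (- R * t) * (\<delta> * t) ^ m / fact m) * GG A m M (m - m) y \<le> sfl_pk \<theta> m m t y A"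
      by (rule core[OF A(1) dpos M_def]) (use yp y dle Rb t in \<open>auto simp: pos_orthant_def\<close>)
    moreover have "GG A m M (m - m) y = emeasure \<nu> A"
    proof -
      have "GG A m M (m - m) y = (\<integral>\<^sup>+x. indicator A x \<partial>\<nu>)"
        by (simp add: GG_def[OF A(1) dpos M_def] \<nu>_def mrg_def atLeast0LessThan)
      also have "\<dots> = emeasure \<nu> A" using A nu_sets by simp
      finally show ?thesis .
    qed
    moreover have "sfl_pk \<theta> m m t y A \<le> sfl_kernel \<theta> n t y A"
      unfolding sfl_kernel_def m_def[symmetric]
      using sum_le_suminf[OF summableI, of "{m}" "\<lambda>k. sfl_pk \<theta> m k t y A"] by simp
    ultimately show ?thesis by (simp add: c_def)
  qed
  have cpos: "0 < c t" if "0 < t" for t using that dpos by (simp add: c_def)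
  have inf: "0 < (INF t\<in>{a..b}. c t)" if ab: "0 < a" "a \<le> b" for a b
  proof -
    let ?L = "exp (- R * b) * (\<delta> * a) ^ m / fact m"
    have "?L \<le> c t" if t: "t \<in> {a..b}" for t
    proof -
      have "exp (- R * b) \<le> exp (- R * t)" using t R0 by (simp add: mult_left_mono)
      moreover have "(\<delta> * a) ^ m \<le> (\<delta> * t) ^ m"
        using t ab dpos by (intro power_mono) (auto simp: mult_left_mono)
      ultimately show ?thesis unfolding c_def
        by (intro divide_right_mono mult_mono) (use ab dpos in auto)
    qed
    then have "?L \<le> (INF t\<in>{a..b}. c t)"
      using ab by (intro cINF_greatest) auto
    moreover have "0 < ?L" using ab dpos by simp
    ultimately show ?thesis by linarith
  qed
  show ?thesis
    apply (rule exI[of _ 1])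
    apply (intro conjI zero_less_one exI[of _ \<nu>] exI[of _ c])
    using nu_prob nu_sets nu_pos main cpos inf unfolding m_def by auto
qed

end
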